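(* Let $\mathbf{C}=\mathbf{FdHilb}$, let $A$ be a finite-dimensional Hilbert space, and let $X=\mathbb{C}^{n}$ with the classical object $\delta:|i\rangle\mapsto|ii\rangle$, $\epsilon:|i\rangle\mapsto 1$. Then the abstract POVMs on $A$ with outcomes in $X$ (in the sense defined below) are exactly the maps of the form $\rho\mapsto\sum_{i=1}^n\mathrm{Tr}(g_i\rho g_i^\dagger)\,|i\rangle\langle i|$ where $g_1,\dots,g_n$ are linear operators on $A$ with $\sum_i g_i^\dagger g_i=1_A$, i.e. exactly the maps $\rho\mapsto\sum_i\mathrm{Tr}(F_i\rho)|i\rangle\langle i|$ for POVMs $\{F_i\}_{i=1}^n$ (positive operators $F_i$ with $\sum_i F_i=1_A$) in the usual sense.
   Context: Classical object: in a $\dagger$-compact category, an object $X$ with $\delta: X\to X\otimes X$, $\epsilon: X\to I$ forming a special ($\delta^\dagger\circ\delta=1_X$) commutative comonoid satisfying $\delta\circ\delta^\dagger=(1_X\otimes\delta^\dagger)\circ(\delta\otimes 1_X)$ and with $\eta_X=\delta\circ\epsilon^\dagger$ (so $X^*=X$). $\mathbf{CPM}(\mathbf{C})$ is Selinger's category whose objects are those of $\mathbf{C}$ and whose morphisms $A\to B$ are the completely positive morphisms $A\otimes A^*\to B\otimes B^*$ of $\mathbf{C}$ (those of the form $(1_B\otimes\eta_C^\dagger\otimes 1_{B^*})\circ(h\otimes h_* )$ up to symmetry, for some $h:A\to B\otimes C$); $Pure(f)=f\otimes f_*$. In $\mathbf{CPM}(\mathbf{FdHilb})$ these are the usual completely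 positive maps, $f\otimes f_*$ acts as $\rho\mapsto f\rho f^\dagger$ and partial trace is the usual one. Decohere $:=\delta\circ\delta^\dagger$ viewed as a morphism $X\to X$ in $\mathbf{CPM}(\mathbf{C})$ (equivalently $(1_X\otimes\eta_X^\dagger\otimes1_X)\circ(\delta\otimes\delta)$). An $X$-isometry is $\mathcal{V}: X\otimes A\to B$ such that $\mathcal{V}_\delta:=(1_X\otimes\mathcal{V})\circ(\delta\otimes1_A)$ satisfies $\mathcal{V}_\delta^\dagger\circ\mathcal{V}_\delta=1_{X\otimes A}$. A morphism $g: A\to X\otimes A$ is $X$-positive if $(\delta^\dagger\otimes 1_A)\circ(1_X\otimes g): X\otimes A\to X\otimes A$ equals $k\circ k^\dagger$ for some object $B$ and morphism $k: B\to X\otimes A$. A morphism $f: A\to X\otimes B$ is $X$-polar-decomposable if $f=\mathcal{V}_\delta\circ g$ for some $X$-positive $g:A\to X\otimes A$ and $X$-isometry $\mathcal{V}:X\otimes A\to B$. An abstract POVM on $A$ with outcomes in $X$ is the morphism $A\to X$ of $\mathbf{CPM}(\mathbf{C})$ obtained from an $X$-polar-decomposable $f: A\to X\otimes A$ with $f^\dagger\circ f=1_A$ by applying $Pure(f)=f\otimes f_*$, then Decohere on the $X$-part, then tracing out $A$ (i.e. $\mathrm{tr}^A[\mathrm{Decohere}\circ(f\otimes f_* )]$). *)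

theory Defs
  imports "Jordan_Normal_Form.Schur_Decomposition"
begin

text \<open>Concrete model of FdHilb: a finite-dimensional Hilbert space of dimension m is
  modelled as complex column vectors of length m; a linear map from dimension p to
  dimension q is a q x p complex matrix; composition is matrix product and the dagger
  is the conjugate transpose (mat_adjoint).  Tensor product of spaces of dimensions
  p and q has dimension p*q with basis index (i,j) mapped to i*q+j.\<close>

definition kron :: "complex mat \<Rightarrow> complex mat \<Rightarrow> complex mat" where
  "kron M N = mat (dim_row M * dim_row N) (dim_col M * dim_col N)
     (\<lambda>(r,c). M $$ (r div dim_row N, c div dim_col N) * N $$ (r mod dim_row N, c mod dim_col N))"

text \<open>The classical object X = C^n with copying map delta |i> = |ii> (an (n*n) x n matrix).\<close>
definition delta :: "nat \<Rightarrow> complex mat" where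
  "delta n = mat (n*n) n (\<lambda>(r,c). if r = c*n + c then 1 else 0)"

definition V_delta :: "nat \<Rightarrow> nat \<Rightarrow> complex mat \<Rightarrow> complex mat" where
  "V_delta n a V = kron (1\<^sub>m n) V * kron (delta n) (1\<^sub>m a)"

definition X_isometry :: "nat \<Rightarrow> nat \<Rightarrow> nat \<Rightarrow> complex mat \<Rightarrow> bool" where
  "X_isometry n a b V \<longleftrightarrow> V \<in> carrier_mat b (n*a) \<and>
     mat_adjoint (V_delta n a V) * V_delta n a V = 1\<^sub>m (n*a)"

definition X_positive :: "nat \<Rightarrow> nat \<Rightarrow> complex mat \<Rightarrow> bool" where
  "X_positive n a g \<longleftrightarrow> g \<in> carrier_mat (n*a) a \<and>
     (\<exists>m k. k \<in> carrier_mat (n*a) m \<and>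
        kron (mat_adjoint (delta n)) (1\<^sub>m a) * kron (1\<^sub>m n) g = k * mat_adjoint k)"

definition X_polar_decomposable :: "nat \<Rightarrow> nat \<Rightarrow> nat \<Rightarrow> complex mat \<Rightarrow> bool" where
  "X_polar_decomposable n a b f \<longleftrightarrow> f \<in> carrier_mat (n*b) a \<and>
     (\<exists>g V. X_positive n a g \<and> X_isometry n a b V \<and> f = V_delta n a V * g)"

definition ketbra :: "nat \<Rightarrow> nat \<Rightarrow> complex mat" where
  "ketbra n i = mat n n (\<lambda>(r,c). if r = i \<and> c = i then 1 else 0)"

definition msum :: "nat \<Rightarrow> nat \<Rightarrow> (nat \<Rightarrow> complex mat) \<Rightarrow> complex mat" where
  "msum d n M = mat d d (\<lambda>(r,c). \<Sum>i<n. M i $$ (r,c))"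

definition pure_map :: "complex mat \<Rightarrow> complex mat \<Rightarrow> complex mat" where
  "pure_map f \<rho> = f * \<rho> * mat_adjoint f"

text \<open>Decohere on the X-part of X (x) A, as a CP map: Kraus operators |i><i| (x) 1_A
  (coming from delta = sum_i |ii><i|), i.e. rho |-> sum_i (|i><i| (x) 1) rho (|i><i| (x) 1).\<close>
definition decohere_X :: "nat \<Rightarrow> nat \<Rightarrow> complex mat \<Rightarrow> complex mat" where
  "decohere_X n a \<rho> = msum (n*a) n (\<lambda>i. kron (ketbra n i) (1\<^sub>m a) * \<rho> * kron (ketbra n i) (1\<^sub>m a))"

definition ptrace_A :: "nat \<Rightarrow> nat \<Rightarrow> complex mat \<Rightarrow> complex mat" where
  "ptrace_A n a M = mat n n (\<lambda>(i,j). \<Sum>k<a. M $$ (i*a + k, j*a + k))"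

definition abstract_povm_map :: "nat \<Rightarrow> nat \<Rightarrow> complex mat \<Rightarrow> complex mat \<Rightarrow> complex mat" where
  "abstract_povm_map n a f \<rho> = ptrace_A n a (decohere_X n a (pure_map f \<rho>))"

definition is_abstract_POVM :: "nat \<Rightarrow> nat \<Rightarrow> (complex mat \<Rightarrow> complex mat) \<Rightarrow> bool" where
  "is_abstract_POVM n d \<Phi> \<longleftrightarrow>
     (\<exists>f. f \<in> carrier_mat (n*d) d \<and> mat_adjoint f * f = 1\<^sub>m d \<and>
          X_polar_decomposable n d d f \<and>
          (\<forall>\<rho> \<in> carrier_mat d d. \<Phi> \<rho> = abstract_povm_map n d f \<rho>))"

definition mtrace :: "complex mat \<Rightarrow> complex" where
  "mtrace M = (\<Sum>i<dim_row M. M $$ (i,i))"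

definition positive_op :: "nat \<Rightarrow> complex mat \<Rightarrow> bool" where
  "positive_op d F \<longleftrightarrow> F \<in> carrier_mat d d \<and>
     (\<forall>v \<in> carrier_vec d. let z = (F *\<^sub>v v) \<bullet>c v in Im z = 0 \<and> Re z \<ge> 0)"

end

theory Submission
  imports Defs "Jordan_Normal_Form.Spectral_Radius"
begin

lemma adj_dims[simp]: "dim_row (mat_adjoint A) = dim_col A" "dim_col (mat_adjoint A) = dim_row A"
  by (simp_all add: mat_adjoint_def mat_of_rows_def)

lemma adj_index[simp]: "i < dim_col A \<Longrightarrow> j < dim_row A \<Longrightarrow> mat_adjoint A $$ (i,j) = cnj (A $$ (j,i))"
  by (simp add: mat_adjoint_def mat_of_rows_def)

lemma adj_carrier[simp]: "A \<in> carrier_mat m n \<Longrightarrow> mat_adjoint A \<in> carrier_mat n m"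
  by auto

lemma mult_entry: "A \<in> carrier_mat m n \<Longrightarrow> B \<in> carrier_mat n p \<Longrightarrow> i < m \<Longrightarrow> j < p \<Longrightarrow>
   (A * B) $$ (i,j) = (\<Sum>k<n. A $$ (i,k) * B $$ (k,j))"
  by (auto simp add: scalar_prod_def atLeast0LessThan intro!: sum.cong)

lemma adj_adj[simp]: "mat_adjoint (mat_adjoint A) = (A :: complex mat)"
  by (rule eq_matI) auto

lemma adj_mult: assumes "A \<in> carrier_mat m n" "B \<in> carrier_mat n p"
  shows "mat_adjoint (A * B) = mat_adjoint B * mat_adjoint (A :: complex mat)"
proof (rule eq_matI)
  fix i j assume ij: "i < dim_row (mat_adjoint B * mat_adjoint A)" "j < dim_col (mat_adjoint B * mat_adjoint A)"
  hence i: "i < p" and j: "j < m" using assms by auto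
  have "mat_adjoint (A * B) $$ (i, j) = cnj ((A*B) $$ (j,i))" using i j assms by simp
  also have "\<dots> = (\<Sum>k<n. cnj (A $$ (j,k)) * cnj (B $$ (k,i)))"
    by (subst mult_entry[OF assms j i]) simp
  also have "\<dots> = (mat_adjoint B * mat_adjoint A) $$ (i,j)"
    by (subst mult_entry[OF adj_carrier[OF assms(2)] adj_carrier[OF assms(1)] i j])
       (use i j assms in \<open>auto simp: mult.commute intro!: sum.cong\<close>)
  finally show "mat_adjoint (A * B) $$ (i, j) = (mat_adjoint B * mat_adjoint A) $$ (i,j)" .
qed (use assms in auto)

lemma adj_one[simp]: "mat_adjoint (1\<^sub>m n :: complex mat) = 1\<^sub>m n"
  by (rule eq_matI) auto

lemma sum_add_split: "(\<Sum>s<m+d. h (s::nat)) = (\<Sum>s<m. h s) + (\<Sum>k<d. h (m+k))"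
  by (induction d) (auto simp: add.assoc)

lemma sum_blocks: "(\<Sum>s<n*d. h (s::nat)) = (\<Sum>i<n. \<Sum>k<d. h (i*d+k))"
proof (induction n)
  case (Suc n)
  have "(\<Sum>s<Suc n*d. h s) = (\<Sum>s<n*d + d. h s)" by (simp add: add.commute)
  also have "\<dots> = (\<Sum>s<n*d. h s) + (\<Sum>k<d. h (n*d+k))" by (rule sum_add_split)
  finally show ?case using Suc by simp
qed simp

lemma sum_single: "finite S \<Longrightarrow> s0 \<in> S \<Longrightarrow> (\<And>s. s \<in> S \<Longrightarrow> s \<noteq> s0 \<Longrightarrow> h s = 0) \<Longrightarrow> sum h S = h s0"
  by (metis sum.remove sum.neutral add.right_neutral DiffE singletonI)
  

lemma cself_real: fixes w :: "complex vec"
  shows "w \<bullet>c w = complex_of_real (Re (w \<bullet>c w)) \<and> Re (w \<bullet>c w) \<ge> 0"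
proof -
  have "w \<bullet>c w \<ge> 0" by (rule conjugate_square_ge_0_vec)
  thus ?thesis by (simp add: less_eq_complex_def complex_eq_iff)
qed

lemma unitary_completion:
  fixes v :: "complex vec"
  assumes v: "v \<in> carrier_vec n" and v0: "v \<noteq> 0\<^sub>v n" and n: "n > 0"
  shows "\<exists>W c. W \<in> carrier_mat n n \<and> mat_adjoint W * W = 1\<^sub>m n \<and> col W 0 = c \<cdot>\<^sub>v v"
proof -
  interpret cof_vec_space n "TYPE(complex)" .
  define b where "b = basis_completion v"
  from basis_completion[OF v v0, folded b_def]
  have dist_b: "distinct b" and indep: "\<not> lin_dep (set b)" and b: "set b \<subseteq> carrier_vec n"
    and hdb: "hd b = v" and len_b: "length b = n" by auto
  from hdb len_b n obtain vs where bv: "b = v # vs" by (cases b, auto)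
  define ws where "ws = gram_schmidt n b"
  from gram_schmidt_result[OF b dist_b indep refl, folded ws_def]
  have ws: "set ws \<subseteq> carrier_vec n" "corthogonal ws" "length ws = n" 
    by (auto simp: len_b)
  from gram_schmidt_hd[OF v, of vs, folded bv] have hdws: "hd ws = v" unfolding ws_def .
  have ws0: "ws ! 0 = v" using hdws ws(3) n by (cases ws) auto
  have wsc: "\<And>i. i < n \<Longrightarrow> ws ! i \<in> carrier_vec n" using ws by auto
  define nr where "nr i = sqrt (Re (ws!i \<bullet>c ws!i))" for i
  have self: "ws!i \<bullet>c ws!i = complex_of_real (nr i ^ 2)" for i
    using cself_real[of "ws!i"] by (simp add: nr_def)
  have nz: "i < n \<Longrightarrow> ws!i \<bullet>c ws!i \<noteq> 0" for i using ws corthogonalD by blast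
  have nrpos: "i < n \<Longrightarrow> nr i > 0" for i
  proof -
    assume i: "i < n"
    have "nr i \<noteq> 0" using nz[OF i] self[of i] by auto
    moreover have "nr i \<ge> 0" using cself_real[of "ws!i"] by (simp add: nr_def)
    ultimately show ?thesis by linarith
  qed
  define us where "us = map (\<lambda>i. (1 / complex_of_real (nr i)) \<cdot>\<^sub>v ws!i) [0..<n]"
  define W where "W = mat_of_cols n us"
  have W: "W \<in> carrier_mat n n" unfolding W_def us_def by auto
  have Wi: "k < n \<Longrightarrow> i < n \<Longrightarrow> W $$ (k,i) = (1 / complex_of_real (nr i)) * ws!i $ k" for k i
    unfolding W_def us_def using carrier_vecD[OF wsc[of i]] by (simp add: mat_of_cols_def)
  have "mat_adjoint W * W = 1\<^sub>m n"
  proof (rule eq_matI)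
    fix i j assume "i < dim_row (1\<^sub>m n :: complex mat)" "j < dim_col (1\<^sub>m n :: complex mat)"
    hence i: "i < n" and j: "j < n" by auto
    have "(mat_adjoint W * W) $$ (i,j) = (\<Sum>k<n. cnj (W $$ (k,i)) * W $$ (k,j))"
      by (subst mult_entry[OF adj_carrier[OF W] W i j]) (use i j W in auto)
    also have "\<dots> = (1 / complex_of_real (nr i * nr j)) * (\<Sum>k<n. ws!j $ k * cnj (ws!i $ k))"
      by (simp add: Wi i j sum_distrib_left mult_ac)
    also have "(\<Sum>k<n. ws!j $ k * cnj (ws!i $ k)) = ws!j \<bullet>c ws!i"
      using wsc[OF i] by (simp add: scalar_prod_def atLeast0LessThan)
    also have "(1 / complex_of_real (nr i * nr j)) * (ws!j \<bullet>c ws!i) = 1\<^sub>m n $$ (i,j)"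
    proof (cases "i = j")
      case True thus ?thesis using self[of i] nrpos[OF i] i
        by (simp add: power2_eq_square)
    next
      case False thus ?thesis using corthogonalD[OF ws(2), of j i] i j ws(3) by simp
    qed
    finally show "(mat_adjoint W * W) $$ (i,j) = 1\<^sub>m n $$ (i,j)" .
  qed (use W in auto)
  moreover have "col W 0 = (1 / complex_of_real (nr 0)) \<cdot>\<^sub>v v"
    using n v by (auto simp: W_def us_def ws0)
  ultimately show ?thesis using W by blast
qed

lemma sum_shift0: "(\<Sum>k<Suc m. f k) = f 0 + (\<Sum>k<m. f (Suc k))"
  by (rule sum.lessThan_Suc_shift)

theorem spectral:
  fixes A :: "complex mat"
  assumes "A \<in> carrier_mat n n" "mat_adjoint A = A"
  shows "\<exists>U D. U \<in> carrier_mat n n \<and> D \<in> carrier_mat n n \<and> mat_adjoint U * U = 1\<^sub>m n \<and>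
     U * mat_adjoint U = 1\<^sub>m n \<and> (\<forall>i<n. \<forall>j<n. i \<noteq> j \<longrightarrow> D $$ (i,j) = 0) \<and> A * U = U * D"
  using assms
proof (induction n arbitrary: A)
  case 0
  show ?case
    by (rule exI[of _ "1\<^sub>m 0"], rule exI[of _ "1\<^sub>m 0"]) (use 0 in \<open>auto intro!: eq_matI\<close>)
next
  case (Suc m)
  define n where "n = Suc m"
  have A: "A \<in> carrier_mat n n" and herm: "mat_adjoint A = A" using Suc n_def by auto
  from spectrum_non_empty[OF A] obtain e where "eigenvalue A e" unfolding spectrum_def n_def by auto
  then obtain v where v: "v \<in> carrier_vec n" "v \<noteq> 0\<^sub>v n" and Av: "A *\<^sub>v v = e \<cdot>\<^sub>v v"
    unfolding eigenvalue_def eigenvector_def using A by auto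
  obtain W c where W: "W \<in> carrier_mat n n" and WaW: "mat_adjoint W * W = 1\<^sub>m n"
    and col0: "col W 0 = c \<cdot>\<^sub>v v" using unitary_completion[OF v] n_def by auto
  have WWa: "W * mat_adjoint W = 1\<^sub>m n"
    by (rule mat_mult_left_right_inverse[OF adj_carrier[OF W] W WaW])
  define A' where "A' = mat_adjoint W * (A * W)"
  have A': "A' \<in> carrier_mat n n" unfolding A'_def by (rule mult_carrier_mat[OF adj_carrier[OF W] mult_carrier_mat[OF A W]])
  have hA': "mat_adjoint A' = A'"
  proof -
    have "mat_adjoint A' = mat_adjoint (A*W) * mat_adjoint (mat_adjoint W)"
      unfolding A'_def by (rule adj_mult[OF adj_carrier[OF W] mult_carrier_mat[OF A W]])
    also have "mat_adjoint (A*W) = mat_adjoint W * A" using adj_mult[OF A W] herm by simp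
    finally show ?thesis unfolding A'_def using A W by (simp add: assoc_mult_mat[of _ n n _ n _ n])
  qed
  have AW0: "(A * W) $$ (k,0) = e * W $$ (k,0)" if k: "k < n" for k
  proof -
    have W0: "l < n \<Longrightarrow> W $$ (l,0) = c * v $ l" for l
      using arg_cong[OF col0, of "\<lambda>x. x $ l"] W v n_def by auto
    have "(A * W) $$ (k,0) = (\<Sum>l<n. A $$ (k,l) * W $$ (l,0))"
      using mult_entry[OF A W k] n_def by simp
    also have "\<dots> = c * (\<Sum>l<n. A $$ (k,l) * v $ l)"
      by (simp add: W0 sum_distrib_left mult_ac)
    also have "(\<Sum>l<n. A $$ (k,l) * v $ l) = (A *\<^sub>v v) $ k"
      using A v k by (simp add: scalar_prod_def atLeast0LessThan)
    also have "\<dots> = e * v $ k" using Av v k by simp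
    finally show ?thesis using W0[OF k] by simp
  qed
  have A'col: "A' $$ (i,0) = (if i = 0 then e else 0)" if i: "i < n" for i
  proof -
    have "A' $$ (i,0) = (\<Sum>k<n. cnj (W $$ (k,i)) * ((A * W) $$ (k,0)))"
      unfolding A'_def using A W i n_def by (subst mult_entry[of _ n n _ n]) auto
    also have "\<dots> = e * (\<Sum>k<n. cnj (W $$ (k,i)) * W $$ (k,0))"
      by (simp add: AW0 sum_distrib_left mult_ac)
    also have "(\<Sum>k<n. cnj (W $$ (k,i)) * W $$ (k,0)) = (mat_adjoint W * W) $$ (i,0)"
      using W i n_def by (subst mult_entry[of _ n n _ n]) auto
    finally show ?thesis using WaW i n_def by simp
  qed
  have ereal: "cnj e = e"
    using arg_cong[OF hA', of "\<lambda>M. M $$ (0,0)"] A'col[of 0] A' n_def by simp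
  have A'row: "A' $$ (0,j) = (if j = 0 then e else 0)" if j: "j < n" for j
    using arg_cong[OF hA', of "\<lambda>M. M $$ (0,j)"] A'col[OF j] A' j n_def ereal by auto
  define A3 where "A3 = mat m m (\<lambda>(i,j). A' $$ (Suc i, Suc j))"
  have A3: "A3 \<in> carrier_mat m m" by (simp add: A3_def)
  have hA3: "mat_adjoint A3 = A3"
  proof (rule eq_matI)
    fix i j assume "i < dim_row A3" "j < dim_col A3"
    hence i: "i < m" and j: "j < m" by (auto simp: A3_def)
    show "mat_adjoint A3 $$ (i,j) = A3 $$ (i,j)"
      using arg_cong[OF hA', of "\<lambda>M. M $$ (Suc i, Suc j)"] A' i j n_def by (simp add: A3_def)
  qed (auto simp: A3_def)
  from Suc.IH[OF A3 hA3] obtain U3 D3 where U3: "U3 \<in> carrier_mat m m" and D3: "D3 \<in> carrier_mat m m"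
    and U3u: "mat_adjoint U3 * U3 = 1\<^sub>m m" and D3d: "\<forall>i<m. \<forall>j<m. i \<noteq> j \<longrightarrow> D3 $$ (i,j) = 0"
    and AU3: "A3 * U3 = U3 * D3" by blast
  define U1 where "U1 = mat n n (\<lambda>(i,j). if i = 0 \<and> j = 0 then 1 else if i = 0 \<or> j = 0 then 0 else U3 $$ (i-1,j-1))"
  define D1 where "D1 = mat n n (\<lambda>(i,j). if i = 0 \<and> j = 0 then e else if i = 0 \<or> j = 0 then 0 else D3 $$ (i-1,j-1))"
  have U1: "U1 \<in> carrier_mat n n" and D1: "D1 \<in> carrier_mat n n" by (auto simp: U1_def D1_def)
  have U1S: "i < m \<Longrightarrow> j < m \<Longrightarrow> U1 $$ (Suc i, Suc j) = U3 $$ (i,j)" for i j by (simp add: U1_def n_def)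
  have U10: "j < n \<Longrightarrow> U1 $$ (0, j) = (if j = 0 then 1 else 0)" for j by (simp add: U1_def)
  have U10': "i < n \<Longrightarrow> U1 $$ (i, 0) = (if i = 0 then 1 else 0)" for i by (simp add: U1_def)
  have D1S: "i < m \<Longrightarrow> j < m \<Longrightarrow> D1 $$ (Suc i, Suc j) = D3 $$ (i,j)" for i j by (simp add: D1_def n_def)
  have D10: "j < n \<Longrightarrow> D1 $$ (0, j) = (if j = 0 then e else 0)" for j by (simp add: D1_def)
  have D10': "i < n \<Longrightarrow> D1 $$ (i, 0) = (if i = 0 then e else 0)" for i by (simp add: D1_def)
  have A'S: "i < m \<Longrightarrow> j < m \<Longrightarrow> A' $$ (Suc i, Suc j) = A3 $$ (i,j)" for i j by (simp add: A3_def)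
  have U1u: "mat_adjoint U1 * U1 = 1\<^sub>m n"
  proof (rule eq_matI)
    fix i j assume "i < dim_row (1\<^sub>m n :: complex mat)" "j < dim_col (1\<^sub>m n :: complex mat)"
    hence i: "i < n" and j: "j < n" by auto
    have "(mat_adjoint U1 * U1) $$ (i,j) = (\<Sum>k<Suc m. cnj (U1 $$ (k,i)) * U1 $$ (k,j))"
      using U1 i j n_def by (subst mult_entry[of _ n n _ n]) auto
    also have "\<dots> = cnj (U1 $$ (0,i)) * U1 $$ (0,j) + (\<Sum>k<m. cnj (U1 $$ (Suc k,i)) * U1 $$ (Suc k,j))"
      by (rule sum_shift0)
    also have "\<dots> = 1\<^sub>m n $$ (i,j)"
    proof (cases i)
      case 0 thus ?thesis using i j U10 U10' by (simp add: n_def)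
    next
      case (Suc i') note si = this
      show ?thesis
      proof (cases j)
        case 0 thus ?thesis using i j U10 U10' si by (simp add: n_def)
      next
        case (Suc j')
        have "(\<Sum>k<m. cnj (U1 $$ (Suc k,i)) * U1 $$ (Suc k,j)) = (\<Sum>k<m. cnj (U3 $$ (k,i')) * U3 $$ (k,j'))"
          using si Suc i j n_def by (intro sum.cong) (auto simp: U1S)
        also have "\<dots> = (mat_adjoint U3 * U3) $$ (i',j')"
          using U3 si Suc i j n_def by (subst mult_entry[of _ m m _ m]) auto
        finally show ?thesis using U3u si Suc i j U10 n_def by simp
      qed
    qed
    finally show "(mat_adjoint U1 * U1) $$ (i,j) = 1\<^sub>m n $$ (i,j)" .
  qed (use U1 in auto)
  have AU1: "A' * U1 = U1 * D1"
  proof (rule eq_matI)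
    fix i j assume "i < dim_row (U1 * D1)" "j < dim_col (U1 * D1)"
    hence i: "i < n" and j: "j < n" using U1 D1 by auto
    have "(A' * U1) $$ (i,j) = (\<Sum>k<Suc m. A' $$ (i,k) * U1 $$ (k,j))"
      using A' U1 i j n_def by (subst mult_entry[of _ n n _ n]) auto
    also have "\<dots> = A' $$ (i,0) * U1 $$ (0,j) + (\<Sum>k<m. A' $$ (i,Suc k) * U1 $$ (Suc k,j))"
      by (rule sum_shift0)
    finally have L: "(A' * U1) $$ (i,j) = A' $$ (i,0) * U1 $$ (0,j) + (\<Sum>k<m. A' $$ (i,Suc k) * U1 $$ (Suc k,j))" .
    have "(U1 * D1) $$ (i,j) = (\<Sum>k<Suc m. U1 $$ (i,k) * D1 $$ (k,j))"
      using D1 U1 i j n_def by (subst mult_entry[of _ n n _ n]) auto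
    also have "\<dots> = U1 $$ (i,0) * D1 $$ (0,j) + (\<Sum>k<m. U1 $$ (i,Suc k) * D1 $$ (Suc k,j))"
      by (rule sum_shift0)
    finally have R: "(U1 * D1) $$ (i,j) = U1 $$ (i,0) * D1 $$ (0,j) + (\<Sum>k<m. U1 $$ (i,Suc k) * D1 $$ (Suc k,j))" .
    show "(A' * U1) $$ (i,j) = (U1 * D1) $$ (i,j)"
    proof (cases i)
      case 0
      have "(\<Sum>k<m. A' $$ (i,Suc k) * U1 $$ (Suc k,j)) = 0"
        using 0 A'row n_def by (intro sum.neutral) auto
      moreover have "(\<Sum>k<m. U1 $$ (i,Suc k) * D1 $$ (Suc k,j)) = 0"
        using 0 U10 n_def by (intro sum.neutral) auto
      ultimately show ?thesis using L R 0 A'row U10 D10 i j by simp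
    next
      case (Suc i') note si = this
      show ?thesis
      proof (cases j)
        case 0
        have "(\<Sum>k<m. A' $$ (i,Suc k) * U1 $$ (Suc k,j)) = 0"
          using 0 U10' n_def by (intro sum.neutral) auto
        moreover have "(\<Sum>k<m. U1 $$ (i,Suc k) * D1 $$ (Suc k,j)) = 0"
          using 0 D10' n_def by (intro sum.neutral) auto
        ultimately show ?thesis using L R 0 si A'col U10' D10 i j by simp
      next
        case (Suc j')
        have "(\<Sum>k<m. A' $$ (i,Suc k) * U1 $$ (Suc k,j)) = (\<Sum>k<m. A3 $$ (i',k) * U3 $$ (k,j'))"
          using si Suc i j n_def by (intro sum.cong) (auto simp: U1S A'S)
        also have "\<dots> = (A3 * U3) $$ (i',j')"
          using U3 A3 si Suc i j n_def by (subst mult_entry[of _ m m _ m]) auto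
        also have "\<dots> = (U3 * D3) $$ (i',j')" using AU3 by simp
        also have "\<dots> = (\<Sum>k<m. U3 $$ (i',k) * D3 $$ (k,j'))"
          using U3 D3 si Suc i j n_def by (subst mult_entry[of _ m m _ m]) auto
        also have "\<dots> = (\<Sum>k<m. U1 $$ (i,Suc k) * D1 $$ (Suc k,j))"
          using si Suc i j n_def by (intro sum.cong) (auto simp: U1S D1S)
        finally show ?thesis using L R si Suc A'col U10' i j by simp
      qed
    qed
  qed (use U1 D1 A' in auto)
  define U where "U = W * U1"
  have U: "U \<in> carrier_mat n n" using W U1 by (simp add: U_def)
  have Uu: "mat_adjoint U * U = 1\<^sub>m n"
  proof -
    have "mat_adjoint U * U = mat_adjoint U1 * mat_adjoint W * (W * U1)"
      by (simp add: U_def adj_mult[OF W U1])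
    also have "\<dots> = mat_adjoint U1 * (mat_adjoint W * (W * U1))"
      by (rule assoc_mult_mat[OF adj_carrier[OF U1] adj_carrier[OF W] mult_carrier_mat[OF W U1]])
    also have "mat_adjoint W * (W * U1) = (mat_adjoint W * W) * U1"
      by (rule assoc_mult_mat[OF adj_carrier[OF W] W U1, symmetric])
    finally show ?thesis using WaW U1u U1 by simp
  qed
  have UUa: "U * mat_adjoint U = 1\<^sub>m n"
    by (rule mat_mult_left_right_inverse[OF adj_carrier[OF U] U Uu])
  have AW: "A * W = W * A'"
  proof -
    have "W * A' = (W * mat_adjoint W) * (A * W)"
      unfolding A'_def using W A by (simp add: assoc_mult_mat[of _ n n _ n _ n])
    thus ?thesis using WWa A W by simp
  qed
  have "A * U = U * D1"
  proof -
    have "A * U = (A * W) * U1" unfolding U_def using A W U1 by (simp add: assoc_mult_mat[of _ n n _ n _ n])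
    also have "\<dots> = W * (A' * U1)" unfolding AW using A' W U1 by (simp add: assoc_mult_mat[of _ n n _ n _ n])
    also have "\<dots> = U * D1" unfolding AU1 U_def using D1 W U1 by (simp add: assoc_mult_mat[of _ n n _ n _ n])
    finally show ?thesis .
  qed
  moreover have "\<forall>i<n. \<forall>j<n. i \<noteq> j \<longrightarrow> D1 $$ (i,j) = 0"
  proof (intro allI impI)
    fix i j assume ij: "i < n" "j < n" "i \<noteq> j"
    show "D1 $$ (i,j) = 0"
    proof (cases "i = 0 \<or> j = 0")
      case True thus ?thesis using ij by (auto simp: D1_def)
    next
      case False thus ?thesis using ij D3d by (auto simp: D1_def n_def)
    qed
  qed
  ultimately show ?case using U D1 Uu UUa unfolding n_def by blast
qed

lemma sum_delta_mult: "j < (d::nat) \<Longrightarrow> (\<Sum>l<d. f l * (if l = j then c else 0)) = f j * (c::complex)"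
  by (subst sum_single[of "{..<d}" j]) auto

lemma sum_delta_mult': "j < (d::nat) \<Longrightarrow> (\<Sum>l<d. (if l = j then c else 0) * f l) = c * (f j::complex)"
  by (subst sum_single[of "{..<d}" j]) auto

lemma qform: assumes F: "F \<in> carrier_mat d d" and v: "v \<in> carrier_vec d"
  shows "(F *\<^sub>v v) \<bullet>c v = (\<Sum>i<d. (\<Sum>l<d. F $$ (i,l) * v $ l) * cnj (v $ i))"
  using F v by (auto simp: scalar_prod_def atLeast0LessThan intro!: sum.cong)

lemma qform_two: assumes F: "F \<in> carrier_mat d d" and j: "j < d" and k: "k < d"
  shows "(F *\<^sub>v vec d (\<lambda>t. (if t = j then 1 else 0) + (if t = k then c else 0))) \<bullet>c
            vec d (\<lambda>t. (if t = j then 1 else 0) + (if t = k then c else 0))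
         = (F $$ (j,j) + c * F $$ (j,k)) + (F $$ (k,j) + c * F $$ (k,k)) * cnj c"
proof -
  let ?v = "vec d (\<lambda>t. (if t = j then 1 else 0) + (if t = k then c else 0))"
  have "(F *\<^sub>v ?v) \<bullet>c ?v = (\<Sum>i<d. (\<Sum>l<d. F $$ (i,l) * ?v $ l) * cnj (?v $ i))"
    by (rule qform[OF F]) simp
  also have "\<dots> = (\<Sum>i<d. (F $$ (i,j) + c * F $$ (i,k)) * ((if i = j then 1 else 0) + (if i = k then cnj c else 0)))"
  proof (rule sum.cong[OF refl])
    fix i assume "i \<in> {..<d}"
    have "(\<Sum>l<d. F $$ (i,l) * ?v $ l) = (\<Sum>l<d. F $$ (i,l) * (if l = j then 1 else 0) + F $$ (i,l) * (if l = k then c else 0))"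
      by (intro sum.cong) (auto simp: distrib_left)
    also have "\<dots> = F $$ (i,j) + c * F $$ (i,k)"
      by (simp only: sum.distrib sum_delta_mult[OF j] sum_delta_mult[OF k]) simp
    finally show "(\<Sum>l<d. F $$ (i,l) * ?v $ l) * cnj (?v $ i) = (F $$ (i,j) + c * F $$ (i,k)) * ((if i = j then 1 else 0) + (if i = k then cnj c else 0))"
      using \<open>i \<in> {..<d}\<close> by auto
  qed
  also have "\<dots> = (\<Sum>i<d. (if i = j then 1 else 0) * (F $$ (i,j) + c * F $$ (i,k)) + (if i = k then cnj c else 0) * (F $$ (i,j) + c * F $$ (i,k)))"
    by (intro sum.cong) (auto simp: algebra_simps)
  also have "\<dots> = (F $$ (j,j) + c * F $$ (j,k)) + (F $$ (k,j) + c * F $$ (k,k)) * cnj c"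
    by (simp only: sum.distrib sum_delta_mult'[OF j] sum_delta_mult'[OF k]) (simp add: mult.commute)
  finally show ?thesis .
qed

lemma t1: fixes a b c e :: complex
  assumes "Im ((a + 1 * b) + (c + 1 * e) * cnj 1) = 0" "Im a = 0" "Im e = 0"
  shows "Im (b + c) = 0"
proof -
  have "(a + 1 * b) + (c + 1 * e) * cnj 1 = (a + e) + (b + c)" by simp
  hence "Im (a + e) + Im (b + c) = 0" using assms(1) by simp
  thus ?thesis using assms by simp
qed
lemma t2: fixes a b c e :: complex
  assumes "Im ((a + \<i> * b) + (c + \<i> * e) * cnj \<i>) = 0" "Im a = 0" "Im e = 0"
  shows "Re (b - c) = 0"
proof -
  have "(a + \<i> * b) + (c + \<i> * e) * cnj \<i> = (a + e) + \<i> * (b - c)" by (simp add: algebra_simps)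
  hence "Im (a + e) + Re (b - c) = 0" using assms(1) by simp
  thus ?thesis using assms by simp
qed

lemma pos_herm: assumes P: "positive_op d F" shows "mat_adjoint F = F"
proof -
  have F: "F \<in> carrier_mat d d" using P unfolding positive_op_def by (rule conjunct1)
  have P': "\<forall>v\<in>carrier_vec d. Im ((F *\<^sub>v v) \<bullet>c v) = 0 \<and> Re ((F *\<^sub>v v) \<bullet>c v) \<ge> 0"
    using P unfolding positive_op_def Let_def by (rule conjunct2)
  have q: "Im ((F $$ (j,j) + c * F $$ (j,k)) + (F $$ (k,j) + c * F $$ (k,k)) * cnj c) = 0"
    if j: "j < d" and k: "k < d" for j k c
  proof -
    have "vec d (\<lambda>t. (if t = j then 1 else 0) + (if t = k then c else 0)) \<in> carrier_vec d" by simp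
    from conjunct1[OF bspec[OF P' this]] show ?thesis unfolding qform_two[OF F j k] .
  qed
  have t0: "Im ((a + 0 * b) + (c + 0 * e) * cnj 0) = 0 \<Longrightarrow> Im a = 0" for a b c e :: complex
    by simp
  have diag: "Im (F $$ (j,j)) = 0" if j: "j < d" for j
    by (rule t0[OF q[OF j j, of 0]])
  have off: "F $$ (k,j) = cnj (F $$ (j,k))" if j: "j < d" and k: "k < d" for j k
  proof -
    have 1: "Im (F $$ (j,k) + F $$ (k,j)) = 0"
      by (rule t1[OF q[OF j k, of 1] diag[OF j] diag[OF k]])
    have 2: "Re (F $$ (j,k) - F $$ (k,j)) = 0"
      by (rule t2[OF q[OF j k, of \<i>] diag[OF j] diag[OF k]])
    have r: "Re (F $$ (k,j)) = Re (F $$ (j,k))" using 2 by simp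
    have i: "Im (F $$ (k,j)) = - Im (F $$ (j,k))" using 1 by simp
    show ?thesis by (rule complex_eqI) (simp_all add: r i)
  qed
  show ?thesis
  proof (rule eq_matI)
    fix i j assume "i < dim_row F" "j < dim_col F"
    hence i: "i < d" and j: "j < d" using F by auto
    show "mat_adjoint F $$ (i, j) = F $$ (i, j)"
      using off[OF j i] i j F by simp
  qed (use F in simp_all)
qed

definition dg :: "nat \<Rightarrow> (nat \<Rightarrow> complex) \<Rightarrow> complex mat" where
  "dg d a = mat d d (\<lambda>(i,j). if i = j then a i else 0)"

lemma dg_carrier[simp]: "dg d a \<in> carrier_mat d d" by (simp add: dg_def)

lemma dg_mult: "dg d a * dg d b = dg d (\<lambda>i. a i * b i)"
proof (rule eq_matI)
  fix i j assume "i < dim_row (dg d (\<lambda>i. a i * b i))" "j < dim_col (dg d (\<lambda>i. a i * b i))"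
  hence i: "i < d" and j: "j < d" by (auto simp: dg_def)
  have "(dg d a * dg d b) $$ (i,j) = (\<Sum>k<d. dg d a $$ (i,k) * dg d b $$ (k,j))"
    by (rule mult_entry[OF dg_carrier dg_carrier i j])
  also have "\<dots> = (\<Sum>k<d. (if k = i then a i else 0) * dg d b $$ (k,j))"
    using i by (intro sum.cong) (auto simp: dg_def)
  also have "\<dots> = a i * dg d b $$ (i,j)" by (rule sum_delta_mult'[OF i])
  finally show "(dg d a * dg d b) $$ (i,j) = dg d (\<lambda>i. a i * b i) $$ (i,j)"
    using i j by (simp add: dg_def)
qed (simp_all add: dg_def)

lemma dg_adj: "mat_adjoint (dg d a) = dg d (\<lambda>i. cnj (a i))"
  by (rule eq_matI) (auto simp: dg_def)

lemma diag_dg: assumes "D \<in> carrier_mat d d" "\<forall>i<d. \<forall>j<d. i \<noteq> j \<longrightarrow> D $$ (i,j) = 0"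
  shows "D = dg d (\<lambda>i. D $$ (i,i))"
  by (rule eq_matI) (use assms in \<open>auto simp: dg_def\<close>)

lemma assoc_d: "A \<in> carrier_mat d d \<Longrightarrow> B \<in> carrier_mat d d \<Longrightarrow> C \<in> carrier_mat d d \<Longrightarrow>
  A * B * C = A * (B * (C :: complex mat))"
  by (rule assoc_mult_mat)

lemma mult_sq[simp]: "A \<in> carrier_mat d d \<Longrightarrow> B \<in> carrier_mat d d \<Longrightarrow> A * B \<in> carrier_mat d d"
  by (rule mult_carrier_mat)

lemma psd_sqrt: assumes P: "positive_op d F"
  shows "\<exists>K. K \<in> carrier_mat d d \<and> (K * mat_adjoint K) * (K * mat_adjoint K) = F"
proof -
  have F: "F \<in> carrier_mat d d" using P unfolding positive_op_def by (rule conjunct1)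
  have P': "\<forall>v\<in>carrier_vec d. Im ((F *\<^sub>v v) \<bullet>c v) = 0 \<and> Re ((F *\<^sub>v v) \<bullet>c v) \<ge> 0"
    using P unfolding positive_op_def Let_def by (rule conjunct2)
  obtain U D where U: "U \<in> carrier_mat d d" and D: "D \<in> carrier_mat d d"
    and Uu: "mat_adjoint U * U = 1\<^sub>m d" and UUa: "U * mat_adjoint U = 1\<^sub>m d"
    and Dd: "\<forall>i<d. \<forall>j<d. i \<noteq> j \<longrightarrow> D $$ (i,j) = 0" and FU: "F * U = U * D"
    using spectral[OF F pos_herm[OF P]] by blast
  have Ua: "mat_adjoint U \<in> carrier_mat d d" using U by simp
  have DUFU: "mat_adjoint U * (F * U) = D"
  proof -
    have "mat_adjoint U * (F * U) = mat_adjoint U * (U * D)" by (simp add: FU)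
    also have "\<dots> = (mat_adjoint U * U) * D" by (rule assoc_d[OF Ua U D, symmetric])
    finally show ?thesis using Uu D by simp
  qed
  have Dii: "D $$ (i,i) = (F *\<^sub>v col U i) \<bullet>c col U i" if i: "i < d" for i
  proof -
    have "D $$ (i,i) = (\<Sum>k<d. mat_adjoint U $$ (i,k) * (F * U) $$ (k,i))"
      unfolding DUFU[symmetric] by (rule mult_entry[OF Ua mult_carrier_mat[OF F U] i i])
    also have "\<dots> = (\<Sum>k<d. (\<Sum>l<d. F $$ (k,l) * col U i $ l) * cnj (col U i $ k))"
    proof (rule sum.cong[OF refl])
      fix k assume k: "k \<in> {..<d}"
      have "(F * U) $$ (k,i) = (\<Sum>l<d. F $$ (k,l) * U $$ (l,i))"
        using k by (intro mult_entry[OF F U]) (auto simp: i)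
      also have "\<dots> = (\<Sum>l<d. F $$ (k,l) * col U i $ l)"
        using U i by (intro sum.cong) auto
      finally show "mat_adjoint U $$ (i,k) * (F * U) $$ (k,i) = (\<Sum>l<d. F $$ (k,l) * col U i $ l) * cnj (col U i $ k)"
        using k U i by (simp add: mult.commute)
    qed
    also have "\<dots> = (F *\<^sub>v col U i) \<bullet>c col U i"
      by (rule qform[OF F, symmetric], rule carrier_vecI) (use U in simp)
    finally show ?thesis .
  qed
  define lam where "lam i = max 0 (Re (D $$ (i,i)))" for i
  have lam_nn: "lam i \<ge> 0" for i by (simp add: lam_def)
  have lam: "D $$ (i,i) = complex_of_real (lam i) \<and> lam i \<ge> 0" if i: "i < d" for i
  proof -
    have "col U i \<in> carrier_vec d" by (rule carrier_vecI) (use U in simp)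
    from bspec[OF P' this] Dii[OF i] show ?thesis by (simp add: lam_def complex_eq_iff max_def)
  qed
  define t where "t i = complex_of_real (sqrt (sqrt (lam i)))" for i
  define s where "s i = complex_of_real (sqrt (lam i))" for i
  define K where "K = U * dg d t"
  have K: "K \<in> carrier_mat d d" using U by (simp add: K_def)
  have tt0: "(\<lambda>i. cnj (t i)) = t" by (rule ext) (simp add: t_def)
  have tt: "dg d (\<lambda>i. cnj (t i)) = dg d t" by (simp only: tt0)
  have T: "dg d t \<in> carrier_mat d d" and S: "dg d s \<in> carrier_mat d d" by simp_all
  have KK: "K * mat_adjoint K = U * dg d s * mat_adjoint U"
  proof -
    have "mat_adjoint K = dg d t * mat_adjoint U" unfolding K_def adj_mult[OF U dg_carrier] dg_adj tt ..
    hence "K * mat_adjoint K = U * dg d t * (dg d t * mat_adjoint U)" by (simp add: K_def)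
    also have "\<dots> = U * (dg d t * (dg d t * mat_adjoint U))" by (rule assoc_d[OF U T mult_sq[OF T Ua]])
    also have "dg d t * (dg d t * mat_adjoint U) = (dg d t * dg d t) * mat_adjoint U" by (rule assoc_d[OF T T Ua, symmetric])
    also have "dg d t * dg d t = dg d s"
      unfolding dg_mult by (rule arg_cong[where f="dg d"]) (auto simp: t_def s_def fun_eq_iff lam_nn simp flip: of_real_mult)
    also have "U * (dg d s * mat_adjoint U) = U * dg d s * mat_adjoint U" by (rule assoc_d[OF U S Ua, symmetric])
    finally show ?thesis .
  qed
  have ss: "dg d s * dg d s = D"
  proof -
    have "dg d s * dg d s = dg d (\<lambda>i. s i * s i)" by (rule dg_mult)
    also have "\<dots> = dg d (\<lambda>i. D $$ (i,i))"
      unfolding dg_def using lam by (intro eq_matI) (auto simp: s_def simp flip: of_real_mult)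
    also have "\<dots> = D" using diag_dg[OF D Dd] by simp
    finally show ?thesis .
  qed
  define X where "X = U * dg d s * mat_adjoint U"
  have X: "X \<in> carrier_mat d d" unfolding X_def by (intro mult_sq U S Ua)
  have XU: "X * U = U * dg d s"
  proof -
    have "X * U = U * dg d s * (mat_adjoint U * U)" unfolding X_def by (rule assoc_d[OF mult_sq[OF U S] Ua U])
    thus ?thesis using Uu U S by simp
  qed
  have "X * X * U = X * (X * U)" by (rule assoc_d[OF X X U])
  also have "\<dots> = X * (U * dg d s)" by (simp only: XU)
  also have "\<dots> = X * U * dg d s" by (rule assoc_d[OF X U S, symmetric])
  also have "\<dots> = U * dg d s * dg d s" by (simp only: XU)
  also have "\<dots> = U * (dg d s * dg d s)" by (rule assoc_d[OF U S S])
  also have "\<dots> = F * U" unfolding ss FU ..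
  finally have XXU: "X * X * U = F * U" .
  have "X * X = X * X * (U * mat_adjoint U)" using UUa X by simp
  also have "\<dots> = X * X * U * mat_adjoint U" by (rule assoc_d[OF mult_sq[OF X X] U Ua, symmetric])
  also have "\<dots> = F * (U * mat_adjoint U)" unfolding XXU by (rule assoc_d[OF F U Ua])
  also have "\<dots> = F" using UUa F by simp
  finally have "(K * mat_adjoint K) * (K * mat_adjoint K) = F" unfolding KK X_def .
  thus ?thesis using K by blast
qed

lemma kron_dims[simp]: "dim_row (kron M N) = dim_row M * dim_row N" "dim_col (kron M N) = dim_col M * dim_col N"
  by (simp_all add: kron_def)

lemma kron_index: "r < dim_row M * dim_row N \<Longrightarrow> s < dim_col M * dim_col N \<Longrightarrow>
  kron M N $$ (r,s) = M $$ (r div dim_row N, s div dim_col N) * N $$ (r mod dim_row N, s mod dim_col N)"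
  by (simp add: kron_def)

lemma msum_index: "r < d' \<Longrightarrow> c < d' \<Longrightarrow> msum d' n Ms $$ (r,c) = (\<Sum>i<n. Ms i $$ (r,c))"
  by (simp add: msum_def)

lemma msum_carrier[simp]: "msum d' n Ms \<in> carrier_mat d' d'" by (simp add: msum_def)

lemma divmod_eq: "(d::nat) > 0 \<Longrightarrow> (r = s) \<longleftrightarrow> (r div d = s div d \<and> r mod d = s mod d)"
  by (metis div_mult_mod_eq)

lemma lt_mult_pos: "(r::nat) < n * d \<Longrightarrow> d > 0" by (cases d) auto

lemma div_lt: "(r::nat) < n * d \<Longrightarrow> r div d < n"
  by (simp add: less_mult_imp_div_less)

lemma proj_index: assumes r: "r < n*d" and s: "s < n*d"
  shows "kron (ketbra n l) (1\<^sub>m d) $$ (r,s) = (if r div d = l \<and> r = s then 1 else 0)"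
proof -
  have d: "d > 0" using lt_mult_pos[OF r] .
  have "kron (ketbra n l) (1\<^sub>m d) $$ (r,s) = ketbra n l $$ (r div d, s div d) * 1\<^sub>m d $$ (r mod d, s mod d)"
    using r s by (subst kron_index) (auto simp: ketbra_def)
  also have "\<dots> = (if r div d = l \<and> r = s then 1 else 0)"
    using div_lt[OF r] div_lt[OF s] d divmod_eq[OF d, of r s] by (auto simp: ketbra_def)
  finally show ?thesis .
qed

lemma proj_carrier[simp]: "kron (ketbra n l) (1\<^sub>m d) \<in> carrier_mat (n*d) (n*d)"
  by (rule carrier_matI) (simp_all add: ketbra_def)

lemma proj_sandwich: assumes M: "M \<in> carrier_mat (n*d) (n*d)" and r: "r < n*d" and c: "c < n*d"
  shows "(kron (ketbra n l) (1\<^sub>m d) * M * kron (ketbra n l) (1\<^sub>m d)) $$ (r,c)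
     = (if r div d = l \<and> c div d = l then M $$ (r,c) else 0)"
proof -
  let ?P = "kron (ketbra n l) (1\<^sub>m d)"
  have PM: "(?P * M) $$ (r,t) = (if r div d = l then M $$ (r,t) else 0)" if t: "t < n*d" for t
  proof -
    have "(?P * M) $$ (r,t) = (\<Sum>s<n*d. ?P $$ (r,s) * M $$ (s,t))"
      by (rule mult_entry[OF proj_carrier M r t])
    also have "\<dots> = ?P $$ (r,r) * M $$ (r,t)"
      by (rule sum_single) (use r in \<open>auto simp: proj_index\<close>)
    finally show ?thesis using r by (simp add: proj_index)
  qed
  have "(?P * M * ?P) $$ (r,c) = (\<Sum>t<n*d. (?P * M) $$ (r,t) * ?P $$ (t,c))"
    by (rule mult_entry[OF mult_carrier_mat[OF proj_carrier M] proj_carrier r c])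
  also have "\<dots> = (?P * M) $$ (r,c) * ?P $$ (c,c)"
    by (rule sum_single) (use c in \<open>auto simp: proj_index\<close>)
  finally show ?thesis using r c by (auto simp: proj_index PM)
qed

lemma decohere_index: assumes M: "M \<in> carrier_mat (n*d) (n*d)" and r: "r < n*d" and c: "c < n*d"
  shows "decohere_X n d M $$ (r,c) = (if r div d = c div d then M $$ (r,c) else 0)"
proof -
  have "decohere_X n d M $$ (r,c) = (\<Sum>l<n. if r div d = l \<and> c div d = l then M $$ (r,c) else 0)"
    unfolding decohere_X_def using r c by (simp add: msum_index proj_sandwich[OF M r c])
  also have "\<dots> = (if r div d = c div d then M $$ (r,c) else 0)"
    by (subst sum_single[of _ "r div d"]) (use div_lt[OF r] in auto)
  finally show ?thesis .
qed

definition blk :: "nat \<Rightarrow> complex mat \<Rightarrow> nat \<Rightarrow> complex mat" where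
  "blk d f i = mat d d (\<lambda>(r,c). f $$ (i*d + r, c))"

lemma blk_carrier[simp]: "blk d f i \<in> carrier_mat d d"
  by (rule carrier_matI) (simp_all add: blk_def)

lemma blk_dims[simp]: "dim_row (blk d f i) = d" "dim_col (blk d f i) = d"
  by (simp_all add: blk_def)

lemma mtrace_carrier: "X \<in> carrier_mat d d' \<Longrightarrow> mtrace X = (\<Sum>k<d. X $$ (k,k))"
  by (simp add: mtrace_def)

lemma blk_index[simp]: "r < d \<Longrightarrow> c < d \<Longrightarrow> blk d f i $$ (r,c) = f $$ (i*d + r, c)"
  by (simp add: blk_def)

lemma idx_lt: "(i::nat) < n \<Longrightarrow> k < d \<Longrightarrow> i*d + k < n*d"
proof -
  assume "i < n" "k < d"
  hence "i*d + k < i*d + d" by simp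
  also have "\<dots> = Suc i * d" by simp
  also have "\<dots> \<le> n * d" using \<open>i < n\<close> by (intro mult_le_mono1) simp
  finally show ?thesis .
qed

lemma idx_div[simp]: "(k::nat) < d \<Longrightarrow> (i*d + k) div d = i"
  by simp

lemma idx_mod[simp]: "(k::nat) < d \<Longrightarrow> (i*d + k) mod d = k"
  by simp

lemma ptrace_decohere: assumes M: "M \<in> carrier_mat (n*d) (n*d)" and i: "i < n" and j: "j < n"
  shows "ptrace_A n d (decohere_X n d M) $$ (i,j) = (if i = j then (\<Sum>k<d. M $$ (i*d+k, i*d+k)) else 0)"
proof -
  have "ptrace_A n d (decohere_X n d M) $$ (i,j) = (\<Sum>k<d. decohere_X n d M $$ (i*d+k, j*d+k))"
    using i j by (simp add: ptrace_A_def)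
  also have "\<dots> = (\<Sum>k<d. if i = j then M $$ (i*d+k, i*d+k) else 0)"
    by (intro sum.cong refl) (simp add: decohere_index[OF M idx_lt[OF i] idx_lt[OF j]])
  finally show ?thesis by simp
qed

lemma sandwich_entry: assumes A: "A \<in> carrier_mat p d" and R: "R \<in> carrier_mat d d"
  and p1: "p1 < p" and p2: "p2 < p"
  shows "(A * R * mat_adjoint A) $$ (p1,p2) = (\<Sum>t<d. (\<Sum>s<d. A $$ (p1,s) * R $$ (s,t)) * cnj (A $$ (p2,t)))"
proof -
  have "(A * R * mat_adjoint A) $$ (p1,p2) = (\<Sum>t<d. (A * R) $$ (p1,t) * mat_adjoint A $$ (t,p2))"
    by (rule mult_entry[OF mult_carrier_mat[OF A R] adj_carrier[OF A] p1 p2])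
  also have "\<dots> = (\<Sum>t<d. (\<Sum>s<d. A $$ (p1,s) * R $$ (s,t)) * cnj (A $$ (p2,t)))"
  proof (intro sum.cong refl)
    fix t assume t: "t \<in> {..<d}"
    show "(A * R) $$ (p1,t) * mat_adjoint A $$ (t,p2) = (\<Sum>s<d. A $$ (p1,s) * R $$ (s,t)) * cnj (A $$ (p2,t))"
      using t A p2 by (simp add: mult_entry[OF A R p1])
  qed
  finally show ?thesis .
qed

lemma povm_formula: assumes f: "f \<in> carrier_mat (n*d) d" and R: "R \<in> carrier_mat d d"
  shows "abstract_povm_map n d f R = msum n n (\<lambda>i. mtrace (blk d f i * R * mat_adjoint (blk d f i)) \<cdot>\<^sub>m ketbra n i)"
proof (rule eq_matI)
  fix i j assume "i < dim_row (msum n n (\<lambda>i. mtrace (blk d f i * R * mat_adjoint (blk d f i)) \<cdot>\<^sub>m ketbra n i))"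
    "j < dim_col (msum n n (\<lambda>i. mtrace (blk d f i * R * mat_adjoint (blk d f i)) \<cdot>\<^sub>m ketbra n i))"
  hence i: "i < n" and j: "j < n" by (auto simp: msum_def)
  have M: "f * R * mat_adjoint f \<in> carrier_mat (n*d) (n*d)"
    by (rule mult_carrier_mat[OF mult_carrier_mat[OF f R] adj_carrier[OF f]])
  have tr: "mtrace (blk d f i * R * mat_adjoint (blk d f i)) = (\<Sum>k<d. (f * R * mat_adjoint f) $$ (i*d+k, i*d+k))"
  proof -
    have "mtrace (blk d f i * R * mat_adjoint (blk d f i)) = (\<Sum>k<d. (blk d f i * R * mat_adjoint (blk d f i)) $$ (k,k))"
      by (rule mtrace_carrier[OF mult_carrier_mat[OF mult_carrier_mat[OF blk_carrier R] adj_carrier[OF blk_carrier]]])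
    also have "\<dots> = (\<Sum>k<d. (f * R * mat_adjoint f) $$ (i*d+k, i*d+k))"
    proof (intro sum.cong refl)
      fix k assume k: "k \<in> {..<d}"
      hence k': "k < d" by simp
      show "(blk d f i * R * mat_adjoint (blk d f i)) $$ (k,k) = (f * R * mat_adjoint f) $$ (i*d+k, i*d+k)"
        unfolding sandwich_entry[OF blk_carrier R k' k'] sandwich_entry[OF f R idx_lt[OF i k'] idx_lt[OF i k']]
        using k' by (intro sum.cong refl) auto
    qed
    finally show ?thesis .
  qed
  have "abstract_povm_map n d f R $$ (i,j) = (if i = j then (\<Sum>k<d. (f * R * mat_adjoint f) $$ (i*d+k, i*d+k)) else 0)"
    unfolding abstract_povm_map_def pure_map_def by (rule ptrace_decohere[OF M i j])
  also have "\<dots> = (\<Sum>l<n. (mtrace (blk d f l * R * mat_adjoint (blk d f l)) \<cdot>\<^sub>m ketbra n l) $$ (i,j))"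
    by (subst sum_single[of _ i]) (use i j in \<open>auto simp: ketbra_def tr\<close>)
  also have "\<dots> = msum n n (\<lambda>i. mtrace (blk d f i * R * mat_adjoint (blk d f i)) \<cdot>\<^sub>m ketbra n i) $$ (i,j)"
    using i j by (simp add: msum_index)
  finally show "abstract_povm_map n d f R $$ (i,j) = msum n n (\<lambda>i. mtrace (blk d f i * R * mat_adjoint (blk d f i)) \<cdot>\<^sub>m ketbra n i) $$ (i,j)" .
qed (simp_all add: abstract_povm_map_def ptrace_A_def msum_def)

lemma ff_blocks: assumes f: "f \<in> carrier_mat (n*d) d"
  shows "mat_adjoint f * f = msum d n (\<lambda>i. mat_adjoint (blk d f i) * blk d f i)"
proof (rule eq_matI)
  fix r c assume "r < dim_row (msum d n (\<lambda>i. mat_adjoint (blk d f i) * blk d f i))"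
    "c < dim_col (msum d n (\<lambda>i. mat_adjoint (blk d f i) * blk d f i))"
  hence r: "r < d" and c: "c < d" by (auto simp: msum_def)
  have "(mat_adjoint f * f) $$ (r,c) = (\<Sum>s<n*d. mat_adjoint f $$ (r,s) * f $$ (s,c))"
    by (rule mult_entry[OF adj_carrier[OF f] f r c])
  also have "\<dots> = (\<Sum>i<n. \<Sum>k<d. mat_adjoint f $$ (r,i*d+k) * f $$ (i*d+k,c))"
    by (rule sum_blocks)
  also have "\<dots> = (\<Sum>i<n. (mat_adjoint (blk d f i) * blk d f i) $$ (r,c))"
  proof (intro sum.cong refl)
    fix i assume i: "i \<in> {..<n}"
    show "(\<Sum>k<d. mat_adjoint f $$ (r,i*d+k) * f $$ (i*d+k,c)) = (mat_adjoint (blk d f i) * blk d f i) $$ (r,c)"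
      unfolding mult_entry[OF adj_carrier[OF blk_carrier] blk_carrier r c]
      using i f r c idx_lt[of i n] by (intro sum.cong refl) auto
  qed
  also have "\<dots> = msum d n (\<lambda>i. mat_adjoint (blk d f i) * blk d f i) $$ (r,c)"
    using r c by (simp add: msum_index)
  finally show "(mat_adjoint f * f) $$ (r,c) = msum d n (\<lambda>i. mat_adjoint (blk d f i) * blk d f i) $$ (r,c)" .
qed (use f in \<open>simp_all add: msum_def\<close>)

lemma delta_index: "p < n*n \<Longrightarrow> q < n \<Longrightarrow> delta n $$ (p,q) = (if p = q*n+q then 1 else 0)"
  by (simp add: delta_def)

lemma delta_dims[simp]: "dim_row (delta n) = n*n" "dim_col (delta n) = n"
  by (simp_all add: delta_def)

lemma arith1: assumes c: "(c::nat) < n*d" shows "(c div d * n + c div d) * d + c mod d = c div d * (n*d) + c"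
proof -
  have "(c div d * n + c div d) * d + c mod d = c div d * (n*d) + (c div d * d + c mod d)"
    by (simp add: algebra_simps)
  thus ?thesis by simp
qed

lemma arith2: assumes c: "(c::nat) < n*d" and i: "i < n" shows "(i * (n*d) + c) div (n*d) = i" "(i * (n*d) + c) mod (n*d) = c"
  using c by simp_all

lemma Vdelta_index: assumes V: "V \<in> carrier_mat d (n*d)" and r: "r < n*d" and c: "c < n*d"
  shows "V_delta n d V $$ (r,c) = (if r div d = c div d then V $$ (r mod d, c) else 0)"
proof -
  have dpos: "d > 0" using lt_mult_pos[OF r] .
  define i where "i = c div d"
  have i: "i < n" using div_lt[OF c] by (simp add: i_def)
  define s0 where "s0 = i * (n*d) + c"
  have s0': "s0 = (i * n + i) * d + c mod d" using arith1[OF c] by (simp add: s0_def i_def)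
  have s0lt: "s0 < n*(n*d)" unfolding s0_def using idx_lt[OF i c] .
  have s0div: "s0 div d = i * n + i" using s0' dpos by simp
  have s0mod: "s0 mod d = c mod d" using s0' dpos by simp
  have K1: "kron (1\<^sub>m n) V \<in> carrier_mat (n*d) (n*(n*d))" using V by (intro carrier_matI) auto
  have K2: "kron (delta n) (1\<^sub>m d) \<in> carrier_mat (n*(n*d)) (n*d)" by (intro carrier_matI) auto
  have "V_delta n d V $$ (r,c) = (\<Sum>s<n*(n*d). kron (1\<^sub>m n) V $$ (r,s) * kron (delta n) (1\<^sub>m d) $$ (s,c))"
    unfolding V_delta_def by (rule mult_entry[OF K1 K2 r c])
  also have "\<dots> = kron (1\<^sub>m n) V $$ (r,s0) * kron (delta n) (1\<^sub>m d) $$ (s0,c)"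
  proof (rule sum_single)
    fix s assume s: "s \<in> {..<n*(n*d)}" "s \<noteq> s0"
    have sl: "s < n*n*d" using s by (simp add: mult.assoc)
    have "kron (delta n) (1\<^sub>m d) $$ (s,c) = delta n $$ (s div d, c div d) * 1\<^sub>m d $$ (s mod d, c mod d)"
      using sl c by (subst kron_index) auto
    also have "\<dots> = 0"
    proof (cases "s div d = i * n + i \<and> s mod d = c mod d")
      case True
      hence "s = s0" using divmod_eq[OF dpos, of s s0] s0div s0mod by simp
      thus ?thesis using s by simp
    next
      case False
      have "s div d < n*n" using div_lt[OF sl] .
      thus ?thesis using False i dpos by (auto simp: delta_index i_def)
    qed
    finally show "kron (1\<^sub>m n) V $$ (r,s) * kron (delta n) (1\<^sub>m d) $$ (s,c) = 0" by simp
  qed (use s0lt in auto)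
  also have "kron (delta n) (1\<^sub>m d) $$ (s0,c) = 1"
  proof -
    have "s0 < n*n*d" using s0lt by (simp add: mult.assoc)
    hence "kron (delta n) (1\<^sub>m d) $$ (s0,c) = delta n $$ (s0 div d, c div d) * 1\<^sub>m d $$ (s0 mod d, c mod d)"
      using c by (subst kron_index) auto
    also have "\<dots> = 1" using s0div s0mod i dpos div_lt[OF \<open>s0 < n*n*d\<close>] by (simp add: delta_index i_def)
    finally show ?thesis .
  qed
  also have "kron (1\<^sub>m n) V $$ (r,s0) = 1\<^sub>m n $$ (r div d, s0 div (n*d)) * V $$ (r mod d, s0 mod (n*d))"
    using r s0lt V by (subst kron_index) auto
  also have "\<dots> = (if r div d = c div d then V $$ (r mod d, c) else 0)"
    unfolding s0_def arith2[OF c i] using div_lt[OF r] i by (simp add: i_def)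
  finally show ?thesis by simp
qed

lemma Xpos_index: assumes g: "g \<in> carrier_mat (n*d) d" and r: "r < n*d" and c: "c < n*d"
  shows "(kron (mat_adjoint (delta n)) (1\<^sub>m d) * kron (1\<^sub>m n) g) $$ (r,c) = (if r div d = c div d then g $$ (r, c mod d) else 0)"
proof -
  have dpos: "d > 0" using lt_mult_pos[OF r] .
  define j where "j = r div d"
  have j: "j < n" using div_lt[OF r] by (simp add: j_def)
  define s0 where "s0 = j * (n*d) + r"
  have s0': "s0 = (j * n + j) * d + r mod d" using arith1[OF r] by (simp add: s0_def j_def)
  have s0lt: "s0 < n*(n*d)" unfolding s0_def using idx_lt[OF j r] .
  have s0div: "s0 div d = j * n + j" using s0' dpos by simp
  have s0mod: "s0 mod d = r mod d" using s0' dpos by simp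
  have K1: "kron (mat_adjoint (delta n)) (1\<^sub>m d) \<in> carrier_mat (n*d) (n*(n*d))" by (intro carrier_matI) auto
  have K2: "kron (1\<^sub>m n) g \<in> carrier_mat (n*(n*d)) (n*d)" using g by (intro carrier_matI) auto
  have "(kron (mat_adjoint (delta n)) (1\<^sub>m d) * kron (1\<^sub>m n) g) $$ (r,c) =
      (\<Sum>s<n*(n*d). kron (mat_adjoint (delta n)) (1\<^sub>m d) $$ (r,s) * kron (1\<^sub>m n) g $$ (s,c))"
    by (rule mult_entry[OF K1 K2 r c])
  also have "\<dots> = kron (mat_adjoint (delta n)) (1\<^sub>m d) $$ (r,s0) * kron (1\<^sub>m n) g $$ (s0,c)"
  proof (rule sum_single)
    fix s assume s: "s \<in> {..<n*(n*d)}" "s \<noteq> s0"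
    have sl: "s < n*n*d" using s by (simp add: mult.assoc)
    have "kron (mat_adjoint (delta n)) (1\<^sub>m d) $$ (r,s) = mat_adjoint (delta n) $$ (r div d, s div d) * 1\<^sub>m d $$ (r mod d, s mod d)"
      using sl r by (subst kron_index) auto
    also have "\<dots> = 0"
    proof (cases "s div d = j * n + j \<and> s mod d = r mod d")
      case True
      hence "s = s0" using divmod_eq[OF dpos, of s s0] s0div s0mod by simp
      thus ?thesis using s by simp
    next
      case False
      have "s div d < n*n" using div_lt[OF sl] .
      thus ?thesis using False j dpos by (auto simp: delta_index j_def)
    qed
    finally show "kron (mat_adjoint (delta n)) (1\<^sub>m d) $$ (r,s) * kron (1\<^sub>m n) g $$ (s,c) = 0" by simp
  qed (use s0lt in auto)
  also have "kron (mat_adjoint (delta n)) (1\<^sub>m d) $$ (r,s0) = 1"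
  proof -
    have "s0 < n*n*d" using s0lt by (simp add: mult.assoc)
    hence "kron (mat_adjoint (delta n)) (1\<^sub>m d) $$ (r,s0) = mat_adjoint (delta n) $$ (r div d, s0 div d) * 1\<^sub>m d $$ (r mod d, s0 mod d)"
      using r by (subst kron_index) auto
    also have "\<dots> = 1" using s0div s0mod j dpos div_lt[OF \<open>s0 < n*n*d\<close>] by (simp add: delta_index j_def)
    finally show ?thesis .
  qed
  also have "kron (1\<^sub>m n) g $$ (s0,c) = 1\<^sub>m n $$ (s0 div (n*d), c div d) * g $$ (s0 mod (n*d), c mod d)"
    using c s0lt g by (subst kron_index) auto
  also have "\<dots> = (if r div d = c div d then g $$ (r, c mod d) else 0)"
    unfolding s0_def arith2[OF r j] using div_lt[OF c] j by (simp add: j_def)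
  finally show ?thesis by simp
qed

lemma triple_swap: "(\<Sum>k<(d::nat). \<Sum>t<d. \<Sum>s<d. h k t s) = (\<Sum>t<d. \<Sum>s<d. \<Sum>k<d. (h k t s :: complex))"
proof -
  have "(\<Sum>k<d. \<Sum>t<d. \<Sum>s<d. h k t s) = (\<Sum>t<d. \<Sum>k<d. \<Sum>s<d. h k t s)" by (rule sum.swap)
  also have "\<dots> = (\<Sum>t<d. \<Sum>s<d. \<Sum>k<d. h k t s)" by (rule sum.cong[OF refl], rule sum.swap)
  finally show ?thesis .
qed

lemma trace_cyc: assumes A: "A \<in> carrier_mat d d" and R: "R \<in> carrier_mat d d"
  shows "mtrace (A * R * mat_adjoint A) = mtrace (mat_adjoint A * A * R)"
proof -
  have "mtrace (A * R * mat_adjoint A) = (\<Sum>k<d. (A * R * mat_adjoint A) $$ (k,k))"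
    by (rule mtrace_carrier[OF mult_carrier_mat[OF mult_carrier_mat[OF A R] adj_carrier[OF A]]])
  also have "\<dots> = (\<Sum>k<d. \<Sum>t<d. \<Sum>s<d. A $$ (k,s) * R $$ (s,t) * cnj (A $$ (k,t)))"
    by (intro sum.cong refl) (simp add: sandwich_entry[OF A R] sum_distrib_right)
  also have "\<dots> = (\<Sum>t<d. \<Sum>s<d. \<Sum>k<d. A $$ (k,s) * R $$ (s,t) * cnj (A $$ (k,t)))"
    by (rule triple_swap)
  also have "\<dots> = (\<Sum>t<d. (mat_adjoint A * A * R) $$ (t,t))"
  proof (intro sum.cong refl)
    fix t assume t: "t \<in> {..<d}"
    have "(mat_adjoint A * A * R) $$ (t,t) = (\<Sum>s<d. (mat_adjoint A * A) $$ (t,s) * R $$ (s,t))"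
      using t by (intro mult_entry[OF mult_carrier_mat[OF adj_carrier[OF A] A] R]) auto
    also have "\<dots> = (\<Sum>s<d. (\<Sum>k<d. cnj (A $$ (k,t)) * A $$ (k,s)) * R $$ (s,t))"
    proof (intro sum.cong refl)
      fix s assume s: "s \<in> {..<d}"
      have "(mat_adjoint A * A) $$ (t,s) = (\<Sum>k<d. mat_adjoint A $$ (t,k) * A $$ (k,s))"
        using t s by (intro mult_entry[OF adj_carrier[OF A] A]) auto
      also have "\<dots> = (\<Sum>k<d. cnj (A $$ (k,t)) * A $$ (k,s))"
        using t A by (intro sum.cong refl) auto
      finally show "(mat_adjoint A * A) $$ (t,s) * R $$ (s,t) = (\<Sum>k<d. cnj (A $$ (k,t)) * A $$ (k,s)) * R $$ (s,t)" by simp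
    qed
    also have "\<dots> = (\<Sum>s<d. \<Sum>k<d. A $$ (k,s) * R $$ (s,t) * cnj (A $$ (k,t)))"
      by (simp add: sum_distrib_left sum_distrib_right mult_ac)
    finally show "(\<Sum>s<d. \<Sum>k<d. A $$ (k,s) * R $$ (s,t) * cnj (A $$ (k,t))) = (mat_adjoint A * A * R) $$ (t,t)" by simp
  qed
  also have "\<dots> = mtrace (mat_adjoint A * A * R)"
    by (rule mtrace_carrier[OF mult_carrier_mat[OF mult_carrier_mat[OF adj_carrier[OF A] A] R], symmetric])
  finally show ?thesis .
qed

lemma gg_positive: assumes g: "g \<in> carrier_mat d d" shows "positive_op d (mat_adjoint g * g)"
  unfolding positive_op_def Let_def
proof (intro conjI ballI)
  show "mat_adjoint g * g \<in> carrier_mat d d" using g by simp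
  fix v :: "complex vec" assume v: "v \<in> carrier_vec d"
  have G: "mat_adjoint g * g \<in> carrier_mat d d" using g by simp
  have gv: "g *\<^sub>v v \<in> carrier_vec d" using g v by simp
  have "((mat_adjoint g * g) *\<^sub>v v) \<bullet>c v = (\<Sum>i<d. (\<Sum>l<d. (mat_adjoint g * g) $$ (i,l) * v $ l) * cnj (v $ i))"
    by (rule qform[OF G v])
  also have "\<dots> = (\<Sum>i<d. \<Sum>l<d. \<Sum>k<d. cnj (g $$ (k,i)) * g $$ (k,l) * v $ l * cnj (v $ i))"
  proof (intro sum.cong refl)
    fix i assume i: "i \<in> {..<d}"
    have "(\<Sum>l<d. (mat_adjoint g * g) $$ (i,l) * v $ l) = (\<Sum>l<d. \<Sum>k<d. cnj (g $$ (k,i)) * g $$ (k,l) * v $ l)"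
    proof (intro sum.cong refl)
      fix l assume l: "l \<in> {..<d}"
      have "(mat_adjoint g * g) $$ (i,l) = (\<Sum>k<d. mat_adjoint g $$ (i,k) * g $$ (k,l))"
        using i l by (intro mult_entry[OF adj_carrier[OF g] g]) auto
      also have "\<dots> = (\<Sum>k<d. cnj (g $$ (k,i)) * g $$ (k,l))"
        using i g by (intro sum.cong refl) auto
      finally show "(mat_adjoint g * g) $$ (i,l) * v $ l = (\<Sum>k<d. cnj (g $$ (k,i)) * g $$ (k,l) * v $ l)"
        by (simp add: sum_distrib_right)
    qed
    thus "(\<Sum>l<d. (mat_adjoint g * g) $$ (i,l) * v $ l) * cnj (v $ i) = (\<Sum>l<d. \<Sum>k<d. cnj (g $$ (k,i)) * g $$ (k,l) * v $ l * cnj (v $ i))"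
      by (simp add: sum_distrib_right)
  qed
  also have "\<dots> = (\<Sum>k<d. \<Sum>i<d. \<Sum>l<d. cnj (g $$ (k,i)) * g $$ (k,l) * v $ l * cnj (v $ i))"
    by (rule triple_swap[symmetric])
  also have "\<dots> = (g *\<^sub>v v) \<bullet>c (g *\<^sub>v v)"
  proof -
    have "(g *\<^sub>v v) \<bullet>c (g *\<^sub>v v) = (\<Sum>k<d. (\<Sum>l<d. g $$ (k,l) * v $ l) * (\<Sum>i<d. cnj (g $$ (k,i)) * cnj (v $ i)))"
      using g v by (auto simp: scalar_prod_def atLeast0LessThan intro!: sum.cong)
    also have "\<dots> = (\<Sum>k<d. \<Sum>i<d. \<Sum>l<d. cnj (g $$ (k,i)) * g $$ (k,l) * v $ l * cnj (v $ i))"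
      by (simp add: sum_distrib_left sum_distrib_right mult_ac)
    finally show ?thesis ..
  qed
  finally have eq: "((mat_adjoint g * g) *\<^sub>v v) \<bullet>c v = (g *\<^sub>v v) \<bullet>c (g *\<^sub>v v)" .
  show "Im (((mat_adjoint g * g) *\<^sub>v v) \<bullet>c v) = 0" unfolding eq using cself_real[of "g *\<^sub>v v"]
    by (metis Im_complex_of_real)
  show "0 \<le> Re (((mat_adjoint g * g) *\<^sub>v v) \<bullet>c v)" unfolding eq using cself_real[of "g *\<^sub>v v"] by blast
qed

lemma msum_cong: "(\<And>i. i < n \<Longrightarrow> M i = M' i) \<Longrightarrow> msum d n M = msum d n M'"
  unfolding msum_def by (intro eq_matI) auto

lemma construct:
  assumes Ks: "\<forall>i<n. K i \<in> carrier_mat d d"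
  defines "f \<equiv> mat (n*d) d (\<lambda>(r,c). (K (r div d) * mat_adjoint (K (r div d))) $$ (r mod d, c))"
  shows "f \<in> carrier_mat (n*d) d" "\<forall>i<n. blk d f i = K i * mat_adjoint (K i)" "X_polar_decomposable n d d f"
proof -
  show f: "f \<in> carrier_mat (n*d) d" unfolding f_def by (rule carrier_matI) simp_all
  show "\<forall>i<n. blk d f i = K i * mat_adjoint (K i)"
  proof (intro allI impI)
    fix i assume i: "i < n"
    show "blk d f i = K i * mat_adjoint (K i)"
      by (rule eq_matI) (use Ks i in \<open>auto simp: f_def idx_lt\<close>)
  qed
  define Vone where "Vone = mat d (n*d) (\<lambda>(r,c). if c mod d = r then 1 else (0::complex))"
  have Vone: "Vone \<in> carrier_mat d (n*d)" unfolding Vone_def by (rule carrier_matI) simp_all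
  have VD: "V_delta n d Vone = 1\<^sub>m (n*d)"
  proof (rule eq_matI)
    fix r c assume "r < dim_row (1\<^sub>m (n*d) :: complex mat)" "c < dim_col (1\<^sub>m (n*d) :: complex mat)"
    hence r: "r < n*d" and c: "c < n*d" by auto
    have dpos: "d > 0" using lt_mult_pos[OF r] .
    show "V_delta n d Vone $$ (r,c) = 1\<^sub>m (n*d) $$ (r,c)"
      unfolding Vdelta_index[OF Vone r c] using r c dpos divmod_eq[OF dpos, of r c]
      by (auto simp: Vone_def)
  qed (use Vone in \<open>simp_all add: V_delta_def\<close>)
  have iso: "X_isometry n d d Vone"
    unfolding X_isometry_def VD using Vone by simp
  define k where "k = mat (n*d) (n*d) (\<lambda>(r,c). if r div d = c div d then K (r div d) $$ (r mod d, c mod d) else 0)"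
  have k: "k \<in> carrier_mat (n*d) (n*d)" unfolding k_def by (rule carrier_matI) simp_all
  have pos: "X_positive n d f"
    unfolding X_positive_def
  proof (intro conjI exI)
    show "f \<in> carrier_mat (n*d) d" by (rule f)
    show "k \<in> carrier_mat (n*d) (n*d)" by (rule k)
    show "kron (mat_adjoint (delta n)) (1\<^sub>m d) * kron (1\<^sub>m n) f = k * mat_adjoint k"
    proof (rule eq_matI)
      fix r c assume "r < dim_row (k * mat_adjoint k)" "c < dim_col (k * mat_adjoint k)"
      hence r: "r < n*d" and c: "c < n*d" using k by auto
      have dpos: "d > 0" using lt_mult_pos[OF r] .
      have "(k * mat_adjoint k) $$ (r,c) = (\<Sum>s<n*d. k $$ (r,s) * mat_adjoint k $$ (s,c))"
        by (rule mult_entry[OF k adj_carrier[OF k] r c])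
      also have "\<dots> = (\<Sum>i<n. \<Sum>t<d. k $$ (r,i*d+t) * mat_adjoint k $$ (i*d+t,c))"
        by (rule sum_blocks)
      also have "\<dots> = (\<Sum>i<n. if r div d = i \<and> c div d = i then
                           (\<Sum>t<d. K i $$ (r mod d, t) * cnj (K i $$ (c mod d, t))) else 0)"
      proof (intro sum.cong refl)
        fix i assume i: "i \<in> {..<n}"
        show "(\<Sum>t<d. k $$ (r,i*d+t) * mat_adjoint k $$ (i*d+t,c)) = (if r div d = i \<and> c div d = i then
                           (\<Sum>t<d. K i $$ (r mod d, t) * cnj (K i $$ (c mod d, t))) else 0)"
          using i r c k idx_lt[of i n] by (auto simp: k_def intro!: sum.cong sum.neutral)
      qed
      also have "\<dots> = (if r div d = c div d then
                           (\<Sum>t<d. K (r div d) $$ (r mod d, t) * cnj (K (r div d) $$ (c mod d, t))) else 0)"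
        by (subst sum_single[of _ "r div d"]) (use div_lt[OF r] in auto)
      also have "\<dots> = (kron (mat_adjoint (delta n)) (1\<^sub>m d) * kron (1\<^sub>m n) f) $$ (r,c)"
      proof (cases "r div d = c div d")
        case True
        have rd: "r div d < n" using div_lt[OF r] .
        have Kc: "K (r div d) \<in> carrier_mat d d" using Ks rd by simp
        have "(K (r div d) * mat_adjoint (K (r div d))) $$ (r mod d, c mod d) =
              (\<Sum>t<d. K (r div d) $$ (r mod d, t) * mat_adjoint (K (r div d)) $$ (t, c mod d))"
          using dpos by (intro mult_entry[OF Kc adj_carrier[OF Kc]]) auto
        also have "\<dots> = (\<Sum>t<d. K (r div d) $$ (r mod d, t) * cnj (K (r div d) $$ (c mod d, t)))"
          using Kc dpos by (intro sum.cong refl) auto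
        finally show ?thesis unfolding Xpos_index[OF f r c] using True r dpos by (simp add: f_def)
      next
        case False
        thus ?thesis unfolding Xpos_index[OF f r c] by simp
      qed
      finally show "(kron (mat_adjoint (delta n)) (1\<^sub>m d) * kron (1\<^sub>m n) f) $$ (r,c) = (k * mat_adjoint k) $$ (r,c)" ..
    qed (use k f in simp_all)
  qed
  show "X_polar_decomposable n d d f"
    unfolding X_polar_decomposable_def
    using f pos iso VD by (intro conjI exI[of _ f] exI[of _ Vone]) auto
qed

theorem mainTheorem2:
  fixes n d :: nat and \<Phi> :: "complex mat \<Rightarrow> complex mat"
  shows "(is_abstract_POVM n d \<Phi> \<longleftrightarrow>
           (\<exists>g. (\<forall>i<n. g i \<in> carrier_mat d d) \<and>
                msum d n (\<lambda>i. mat_adjoint (g i) * g i) = 1\<^sub>m d \<and>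
                (\<forall>\<rho> \<in> carrier_mat d d.
                   \<Phi> \<rho> = msum n n (\<lambda>i. mtrace (g i * \<rho> * mat_adjoint (g i)) \<cdot>\<^sub>m ketbra n i))))
       \<and> (is_abstract_POVM n d \<Phi> \<longleftrightarrow>
           (\<exists>F. (\<forall>i<n. positive_op d (F i)) \<and> msum d n F = 1\<^sub>m d \<and>
                (\<forall>\<rho> \<in> carrier_mat d d.
                   \<Phi> \<rho> = msum n n (\<lambda>i. mtrace (F i * \<rho>) \<cdot>\<^sub>m ketbra n i))))"
proof -
  let ?G = "\<exists>g. (\<forall>i<n. g i \<in> carrier_mat d d) \<and>
                msum d n (\<lambda>i. mat_adjoint (g i) * g i) = 1\<^sub>m d \<and>
                (\<forall>\<rho> \<in> carrier_mat d d.
                   \<Phi> \<rho> = msum n n (\<lambda>i. mtrace (g i * \<rho> * mat_adjoint (g i)) \<cdot>\<^sub>m ketbra n i))"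
  let ?F = "\<exists>F. (\<forall>i<n. positive_op d (F i)) \<and> msum d n F = 1\<^sub>m d \<and>
                (\<forall>\<rho> \<in> carrier_mat d d.
                   \<Phi> \<rho> = msum n n (\<lambda>i. mtrace (F i * \<rho>) \<cdot>\<^sub>m ketbra n i))"
  have AG: ?G if A: "is_abstract_POVM n d \<Phi>"
  proof -
    from A obtain f where f: "f \<in> carrier_mat (n*d) d" and ff: "mat_adjoint f * f = 1\<^sub>m d"
      and Phi: "\<forall>\<rho> \<in> carrier_mat d d. \<Phi> \<rho> = abstract_povm_map n d f \<rho>"
      unfolding is_abstract_POVM_def by blast
    show ?G
    proof (intro exI conjI ballI allI impI)
      show "blk d f i \<in> carrier_mat d d" for i by simp
      show "msum d n (\<lambda>i. mat_adjoint (blk d f i) * blk d f i) = 1\<^sub>m d"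
        using ff ff_blocks[OF f] by simp
      fix \<rho> :: "complex mat" assume r: "\<rho> \<in> carrier_mat d d"
      show "\<Phi> \<rho> = msum n n (\<lambda>i. mtrace (blk d f i * \<rho> * mat_adjoint (blk d f i)) \<cdot>\<^sub>m ketbra n i)"
        using Phi r povm_formula[OF f r] by simp
    qed
  qed
  have GF: ?F if G: ?G
  proof -
    from G obtain g where g: "\<forall>i<n. g i \<in> carrier_mat d d"
      and gs: "msum d n (\<lambda>i. mat_adjoint (g i) * g i) = 1\<^sub>m d"
      and Phi: "\<forall>\<rho> \<in> carrier_mat d d. \<Phi> \<rho> = msum n n (\<lambda>i. mtrace (g i * \<rho> * mat_adjoint (g i)) \<cdot>\<^sub>m ketbra n i)"
      by blast
    show ?F
    proof (intro exI conjI ballI allI impI)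
      show "positive_op d (mat_adjoint (g i) * g i)" if "i < n" for i
        using gg_positive g that by blast
      show "msum d n (\<lambda>i. mat_adjoint (g i) * g i) = 1\<^sub>m d" by (rule gs)
      fix \<rho> :: "complex mat" assume r: "\<rho> \<in> carrier_mat d d"
      have "\<Phi> \<rho> = msum n n (\<lambda>i. mtrace (g i * \<rho> * mat_adjoint (g i)) \<cdot>\<^sub>m ketbra n i)"
        using Phi r by blast
      also have "\<dots> = msum n n (\<lambda>i. mtrace (mat_adjoint (g i) * g i * \<rho>) \<cdot>\<^sub>m ketbra n i)"
        by (rule msum_cong) (use g r trace_cyc in auto)
      finally show "\<Phi> \<rho> = msum n n (\<lambda>i. mtrace (mat_adjoint (g i) * g i * \<rho>) \<cdot>\<^sub>m ketbra n i)" .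
    qed
  qed
  have FA: "is_abstract_POVM n d \<Phi>" if F: ?F
  proof -
    from F obtain F where Fp: "\<forall>i<n. positive_op d (F i)" and Fs: "msum d n F = 1\<^sub>m d"
      and Phi: "\<forall>\<rho> \<in> carrier_mat d d. \<Phi> \<rho> = msum n n (\<lambda>i. mtrace (F i * \<rho>) \<cdot>\<^sub>m ketbra n i)"
      by blast
    have "\<forall>i. \<exists>Ki. i < n \<longrightarrow> Ki \<in> carrier_mat d d \<and> (Ki * mat_adjoint Ki) * (Ki * mat_adjoint Ki) = F i"
      using psd_sqrt Fp by blast
    then obtain K where K: "\<And>i. i < n \<Longrightarrow> K i \<in> carrier_mat d d \<and> (K i * mat_adjoint (K i)) * (K i * mat_adjoint (K i)) = F i"
      by metis
    have Kc: "\<forall>i<n. K i \<in> carrier_mat d d" using K by blast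
    define f where "f = mat (n*d) d (\<lambda>(r,c). (K (r div d) * mat_adjoint (K (r div d))) $$ (r mod d, c))"
    note cons = construct[OF Kc, folded f_def]
    have f: "f \<in> carrier_mat (n*d) d" by (rule cons(1))
    have blkf: "\<And>i. i < n \<Longrightarrow> blk d f i = K i * mat_adjoint (K i)" using cons(2) by blast
    have herm: "mat_adjoint (K i * mat_adjoint (K i)) = K i * mat_adjoint (K i)" if i: "i < n" for i
      using adj_mult[of "K i" d d "mat_adjoint (K i)" d] K[OF i] by simp
    have ff: "mat_adjoint f * f = 1\<^sub>m d"
    proof -
      have "mat_adjoint f * f = msum d n (\<lambda>i. mat_adjoint (blk d f i) * blk d f i)" by (rule ff_blocks[OF f])
      also have "\<dots> = msum d n F"
        by (rule msum_cong) (simp add: blkf herm K)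
      finally show ?thesis using Fs by simp
    qed
    show ?thesis
      unfolding is_abstract_POVM_def
    proof (intro exI conjI ballI)
      show "f \<in> carrier_mat (n*d) d" by (rule f)
      show "mat_adjoint f * f = 1\<^sub>m d" by (rule ff)
      show "X_polar_decomposable n d d f" by (rule cons(3))
      fix \<rho> :: "complex mat" assume r: "\<rho> \<in> carrier_mat d d"
      have "\<Phi> \<rho> = msum n n (\<lambda>i. mtrace (F i * \<rho>) \<cdot>\<^sub>m ketbra n i)" using Phi r by blast
      also have "\<dots> = msum n n (\<lambda>i. mtrace (blk d f i * \<rho> * mat_adjoint (blk d f i)) \<cdot>\<^sub>m ketbra n i)"
      proof (rule msum_cong)
        fix i assume i: "i < n"
        have Pc: "K i * mat_adjoint (K i) \<in> carrier_mat d d" using K[OF i] by simp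
        have "mtrace (blk d f i * \<rho> * mat_adjoint (blk d f i)) = mtrace (mat_adjoint (blk d f i) * blk d f i * \<rho>)"
          by (rule trace_cyc[OF blk_carrier r])
        also have "mat_adjoint (blk d f i) * blk d f i = F i" using blkf[OF i] herm[OF i] K[OF i] by simp
        finally show "mtrace (F i * \<rho>) \<cdot>\<^sub>m ketbra n i = mtrace (blk d f i * \<rho> * mat_adjoint (blk d f i)) \<cdot>\<^sub>m ketbra n i"
          by simp
      qed
      also have "\<dots> = abstract_povm_map n d f \<rho>" by (rule povm_formula[OF f r, symmetric])
      finally show "\<Phi> \<rho> = abstract_povm_map n d f \<rho>" .
    qed
  qed
  show ?thesis using AG GF FA by blast
qed

end
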